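(* Let $N$ be a non-abelian Iwasawa N-group of a real simple Lie group of real rank one; thus $N$ is a $(2n+1)$-dimensional Heisenberg group, a $(4n+3)$-dimensional quaternionic Heisenberg group, or the $15$-dimensional octonionic Heisenberg group. Let $Z(N)$ be the center of $N$ and let $F:N\to N$ be an abstract (not necessarily continuous) group homomorphism. Assume either (1) $N$ is a $(2n+1)$-dimensional Heisenberg group and $F(z)\neq e$ for some $z\in Z(N)$, or (2) $N$ is quaternionic or octonionic and $F|_{Z(N)}$ is injective. Then $F$ is a group automorphism, and there exist a central automorphism $\mu$ and a Lie group automorphism $\overline{F}$ of $N$ with $F=\mu\circ\overline{F}$. Furthermore, $F|_{Z(N)}:Z(N)\to Z(N)$ and the induced map $N/Z(N)\to N/Z(N)$ are both diffeomorphisms.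
   Context: For a real simple Lie group $G=KAN$ (Iwasawa decomposition), $N$ is its Iwasawa N-group. The $(2n+1)$-dimensional Heisenberg group is the simply connected Lie group with Lie algebra spanned by $X_1,Y_1,\dots,X_n,Y_n,Z$ with $[X_t,Y_t]=Z$ and all other brackets zero. The $(4n+3)$-dimensional quaternionic Heisenberg group is the simply connected Lie group with Lie algebra spanned by $X_t,Y_t,V_t,W_t$ ($t=1..n$), $Z_1,Z_2,Z_3$ with nonzero brackets $[X_t,Y_t]=Z_1$, $[X_t,V_t]=Z_2$, $[X_t,W_t]=Z_3$, $[Y_t,V_t]=Z_3$, $[Y_t,W_t]=-Z_2$, $[V_t,W_t]=Z_1$ (and antisymmetric counterparts). The $15$-dimensional octonionic Heisenberg group is the Iwasawa N-group of the rank one real form $F_{4(-20)}$ (2-step nilpotent with 7-dimensional center). A central automorphism of $N$ is a group automorphism $\mu$ with $x^{-1}\mu(x)\in Z(N)$ for all $x$; a Lie group automorphism is a continuous automorphism. *)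

theory Defs
  imports "HOL-Analysis.Analysis"
begin

text \<open>A 2-step nilpotent Lie algebra V + Z with bracket [v,w] = omega v w (in Z, Z central)
  gives the simply connected group on V x Z with the BCH product
  (v,z)(v',z') = (v+v', z+z'+ 1/2 omega v v').\<close>

definition nmul :: "('v::real_vector \<Rightarrow> 'v \<Rightarrow> 'z::real_vector) \<Rightarrow> 'v \<times> 'z \<Rightarrow> 'v \<times> 'z \<Rightarrow> 'v \<times> 'z" where
  "nmul \<omega> a b = (fst a + fst b, snd a + snd b + (1/2) *\<^sub>R \<omega> (fst a) (fst b))"

definition nunit :: "'v::real_vector \<times> 'z::real_vector" where
  "nunit = (0, 0)"

text \<open>Inverse (valid since omega is skew-symmetric).\<close>
definition ninv :: "'v::real_vector \<times> 'z::real_vector \<Rightarrow> 'v \<times> 'z" where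
  "ninv a = (- fst a, - snd a)"

definition ncenter :: "('v::real_vector \<Rightarrow> 'v \<Rightarrow> 'z::real_vector) \<Rightarrow> ('v \<times> 'z) set" where
  "ncenter \<omega> = {c. \<forall>x. nmul \<omega> c x = nmul \<omega> x c}"

definition nhom :: "('v::real_vector \<Rightarrow> 'v \<Rightarrow> 'z::real_vector) \<Rightarrow> ('v \<times> 'z \<Rightarrow> 'v \<times> 'z) \<Rightarrow> bool" where
  "nhom \<omega> F = (\<forall>a b. F (nmul \<omega> a b) = nmul \<omega> (F a) (F b))"

definition naut :: "('v::real_vector \<Rightarrow> 'v \<Rightarrow> 'z::real_vector) \<Rightarrow> ('v \<times> 'z \<Rightarrow> 'v \<times> 'z) \<Rightarrow> bool" where
  "naut \<omega> F = (nhom \<omega> F \<and> bij F)"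

definition central_aut :: "('v::real_vector \<Rightarrow> 'v \<Rightarrow> 'z::real_vector) \<Rightarrow> ('v \<times> 'z \<Rightarrow> 'v \<times> 'z) \<Rightarrow> bool" where
  "central_aut \<omega> \<mu> = (naut \<omega> \<mu> \<and> (\<forall>x. nmul \<omega> (ninv x) (\<mu> x) \<in> ncenter \<omega>))"

text \<open>Lie group automorphism = continuous automorphism.\<close>
definition lie_aut :: "('v::real_normed_vector \<Rightarrow> 'v \<Rightarrow> 'z::real_normed_vector) \<Rightarrow> ('v \<times> 'z \<Rightarrow> 'v \<times> 'z) \<Rightarrow> bool" where
  "lie_aut \<omega> F = (naut \<omega> F \<and> continuous_on UNIV F)"

fun Ck :: "nat \<Rightarrow> ('a::euclidean_space \<Rightarrow> 'b::euclidean_space) \<Rightarrow> bool" where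
  "Ck 0 f = continuous_on UNIV f"
| "Ck (Suc k) f = ((\<forall>x. f differentiable (at x)) \<and>
                    (\<forall>v. Ck k (\<lambda>x. frechet_derivative f (at x) v)))"

definition smooth :: "('a::euclidean_space \<Rightarrow> 'b::euclidean_space) \<Rightarrow> bool" where
  "smooth f = (\<forall>k. Ck k f)"

definition diffeo :: "('a::euclidean_space \<Rightarrow> 'a) \<Rightarrow> bool" where
  "diffeo f = (bij f \<and> smooth f \<and> smooth (inv f))"

text \<open>N/Z(N) is identified (as a manifold) with V via the projection fst, and
  Z(N) = {0} x Z with Z via snd.\<close>
definition cor_concl :: "('v::euclidean_space \<Rightarrow> 'v \<Rightarrow> 'z::euclidean_space) \<Rightarrow> ('v \<times> 'z \<Rightarrow> 'v \<times> 'z) \<Rightarrow> bool" where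
  "cor_concl \<omega> F =
    (naut \<omega> F \<and>
     (\<exists>\<mu> Fbar. central_aut \<omega> \<mu> \<and> lie_aut \<omega> Fbar \<and> F = \<mu> \<circ> Fbar) \<and>
     bij_betw F (ncenter \<omega>) (ncenter \<omega>) \<and>
     (\<exists>h. diffeo h \<and> (\<forall>x\<in>ncenter \<omega>. snd (F x) = h (snd x))) \<and>
     (\<exists>g. diffeo g \<and> (\<forall>x. fst (F x) = g (fst x))))"

text \<open>(2n+1)-dim Heisenberg: V = (x,y) in R^n x R^n, [X_t,Y_t]=Z.\<close>
definition heis_form :: "((real^'n) \<times> (real^'n)) \<Rightarrow> ((real^'n) \<times> (real^'n)) \<Rightarrow> real" where
  "heis_form a b = fst a \<bullet> snd b - snd a \<bullet> fst b"

text \<open>(4n+3)-dim quaternionic Heisenberg: V = (x,y,v,w), Z = (Z1,Z2,Z3).\<close>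
definition quat_form ::
  "((real^'n) \<times> (real^'n) \<times> (real^'n) \<times> (real^'n)) \<Rightarrow> ((real^'n) \<times> (real^'n) \<times> (real^'n) \<times> (real^'n))
     \<Rightarrow> real \<times> real \<times> real" where
  "quat_form a b = (case a of (x,y,v,w) \<Rightarrow> case b of (x',y',v',w') \<Rightarrow>
     ((x \<bullet> y' - y \<bullet> x') + (v \<bullet> w' - w \<bullet> v'),
      (x \<bullet> v' - v \<bullet> x') - (y \<bullet> w' - w \<bullet> y'),
      (x \<bullet> w' - w \<bullet> x') + (y \<bullet> v' - v \<bullet> y')))"

text \<open>15-dim octonionic Heisenberg (Iwasawa N of F4(-20)): V = O = R x R^7,
  Z = Im O = R^7, bracket [a,b] = Im(conj a * b), with the octonion product
  e_i e_(i+1) = e_(i+3) (indices mod 7).\<close>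
definition oct_form :: "(real \<times> (real^7)) \<Rightarrow> (real \<times> (real^7)) \<Rightarrow> (real^7)" where
  "oct_form a b = (\<chi> k.
     fst a * (snd b $ k) - (snd a $ k) * fst b
     - ((snd a $ (k-3)) * (snd b $ (k-2)) - (snd a $ (k-2)) * (snd b $ (k-3)))
     - ((snd a $ (k+1)) * (snd b $ (k+3)) - (snd a $ (k+3)) * (snd b $ (k+1)))
     - ((snd a $ (k+2)) * (snd b $ (k-1)) - (snd a $ (k-1)) * (snd b $ (k+2))))"

end

theory Submission
  imports Defs
begin


lemma additive_zero:
  fixes f :: "'a::monoid_add \<Rightarrow> 'b::group_add"
  assumes "\<And>a b. f (a + b) = f a + f b" shows "f 0 = 0"
proof -
  have "f 0 + f 0 = f 0 + 0" using assms[of 0 0] by simp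
  then show ?thesis by (rule add_left_imp_eq)
qed

lemma additive_neg:
  fixes f :: "'a::ab_group_add \<Rightarrow> 'b::ab_group_add"
  assumes "\<And>a b. f (a + b) = f a + f b" shows "f (- a) = - f a"
  using assms[of a "-a"] additive_zero[of f, OF assms] by (simp add: eq_neg_iff_add_eq_0 add.commute)

lemma additive_sum:
  fixes f :: "'a::comm_monoid_add \<Rightarrow> 'b::ab_group_add"
  assumes add: "\<And>a b. f (a + b) = f a + f b"
  shows "f (sum g S) = (\<Sum>i\<in>S. f (g i))"
proof (cases "finite S")
  case True
  then show ?thesis
    by (induction S rule: finite_induct) (auto simp: add additive_zero[of f, OF add])
next
  case False
  then show ?thesis using add[of 0 0] by simp
qed

lemma additive_of_nat:
  fixes c :: "real \<Rightarrow> real"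
  assumes add: "\<And>x y. c (x+y) = c x + c y" and one: "c 1 = 1"
  shows "c (of_nat n) = of_nat n"
  by (induction n) (auto simp: add additive_zero[of c, OF add] one)

lemma additive_of_int:
  fixes c :: "real \<Rightarrow> real"
  assumes add: "\<And>x y. c (x+y) = c x + c y" and one: "c 1 = 1"
  shows "c (of_int m) = of_int m"
proof (cases "m \<ge> 0")
  case True
  then obtain n where "m = int n" by (metis nonneg_eq_int)
  then show ?thesis using additive_of_nat[OF add one] by simp
next
  case False
  then obtain n where "m = - int n" by (metis nonpos_int_cases linorder_not_le less_imp_le)
  then show ?thesis using additive_of_nat[OF add one, of n] additive_neg[of c, OF add] by simp
qed

lemma ring_hom_real_id:
  fixes c :: "real \<Rightarrow> real"
  assumes add: "\<And>x y. c (x+y) = c x + c y" and mult: "\<And>x y. c (x*y) = c x * c y"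
    and one: "c 1 = 1"
  shows "c x = x"
proof -
  have nonneg: "c y \<ge> 0" if "y \<ge> 0" for y
  proof -
    have "c y = c (sqrt y * sqrt y)" using that by simp
    also have "\<dots> = c (sqrt y) * c (sqrt y)" by (rule mult)
    finally show ?thesis by simp
  qed
  have mono: "c y \<le> c z" if "y \<le> z" for y z
  proof -
    have "c z = c y + c (z - y)" using add[of y "z-y"] by simp
    moreover have "c (z - y) \<ge> 0" using nonneg that by simp
    ultimately show ?thesis by simp
  qed
  have rat: "c q = q" if "q \<in> \<rat>" for q
  proof -
    from that obtain a b where b: "b > 0" and q: "q = of_int a / of_int b" by (rule Rats_cases')
    have "c (q * of_int b) = c q * of_int b" using mult additive_of_int[OF add one] by simp
    moreover have "q * of_int b = of_int a" using b q by simp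
    ultimately have "c q * of_int b = of_int a" using additive_of_int[OF add one] by simp
    then have "c q = of_int a / of_int b" using b by (simp add: field_simps)
    then show ?thesis using q by simp
  qed
  show ?thesis
  proof (rule ccontr)
    assume ne: "c x \<noteq> x"
    show False
    proof (cases "c x < x")
      case True
      then obtain r where r: "r \<in> \<rat>" "c x < r" "r < x" using Rats_dense_in_real by blast
      then have "c r \<le> c x" using mono by simp
      then show False using rat[OF r(1)] r by simp
    next
      case False
      then have "x < c x" using ne by simp
      then obtain r where r: "r \<in> \<rat>" "x < r" "r < c x" using Rats_dense_in_real by blast
      then have "c x \<le> c r" using mono by simp
      then show False using rat[OF r(1)] r by simp
    qed
  qed
qed



lemma core:
  fixes \<omega> :: "'v::euclidean_space \<Rightarrow> 'v \<Rightarrow> 'z::euclidean_space"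
    and f :: "'v \<Rightarrow> 'v" and \<phi> :: "'z \<Rightarrow> 'z"
  assumes bil: "bilinear \<omega>"
    and A: "\<And>i j. i \<in> Basis \<Longrightarrow> j \<in> Basis \<Longrightarrow> \<omega> i j = 0 \<or> \<omega> i j \<in> Basis \<or> - \<omega> i j \<in> Basis"
    and B: "\<exists>i0\<in>Basis. \<forall>k\<in>Basis. \<exists>j\<in>Basis. \<omega> i0 j = k"
    and D: "\<And>i w. i \<in> Basis \<Longrightarrow> (\<forall>j\<in>Basis. \<omega> i j = 0 \<longrightarrow> \<omega> w j = 0) \<Longrightarrow> \<exists>c. w = c *\<^sub>R i"
    and E: "\<And>a z. a \<noteq> 0 \<Longrightarrow> \<exists>b. \<omega> a b = z"
    and fadd: "\<And>a b. f (a + b) = f a + f b"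
    and padd: "\<And>a b. \<phi> (a + b) = \<phi> a + \<phi> b"
    and rel: "\<And>a b. \<omega> (f a) (f b) = \<phi> (\<omega> a b)"
    and nz: "\<exists>k\<in>Basis. \<phi> k \<noteq> 0"
  shows "linear f \<and> bij f \<and> linear \<phi> \<and> bij \<phi>"
proof -
  define M where "M x = (\<Sum>i\<in>Basis. (x \<bullet> i) *\<^sub>R f i)" for x
  define L where "L z = (\<Sum>k\<in>Basis. (z \<bullet> k) *\<^sub>R \<phi> k)" for z
  have linM: "linear M"
    unfolding M_def by (auto simp: linear_iff inner_add_left scaleR_add_left sum.distrib scaleR_sum_right)
  have linL: "linear L"
    unfolding L_def by (auto simp: linear_iff inner_add_left scaleR_add_left sum.distrib scaleR_sum_right)
  have Mb: "M i = f i" if "i \<in> Basis" for i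
    using that by (simp add: M_def inner_Basis if_distrib[of "\<lambda>c. c *\<^sub>R _"] sum.delta cong: if_cong)
  have Lb: "L k = \<phi> k" if "k \<in> Basis" for k
    using that by (simp add: L_def inner_Basis if_distrib[of "\<lambda>c. c *\<^sub>R _"] sum.delta cong: if_cong)
  have p0: "\<phi> 0 = 0" by (rule additive_zero[of \<phi>, OF padd])
  have pneg: "\<phi> (- x) = - \<phi> x" for x by (rule additive_neg[of \<phi>, OF padd])
  have f0: "f 0 = 0" by (rule additive_zero[of f, OF fadd])
  have LA: "\<phi> (\<omega> i j) = L (\<omega> i j)" if "i \<in> Basis" "j \<in> Basis" for i j
  proof -
    from A[OF that] consider "\<omega> i j = 0" | "\<omega> i j \<in> Basis" | "- \<omega> i j \<in> Basis" by blast
    then show ?thesis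
    proof cases
      case 1 then show ?thesis using p0 linear_0[OF linL] by simp
    next
      case 2 then show ?thesis using Lb by simp
    next
      case 3
      then have "\<phi> (- \<omega> i j) = L (- \<omega> i j)" using Lb by simp
      then show ?thesis using pneg linear_neg[OF linL] by simp
    qed
  qed
  have expand: "\<omega> a b = (\<Sum>(i,j)\<in>Basis \<times> Basis. ((a \<bullet> i) * (b \<bullet> j)) *\<^sub>R \<omega> i j)" for a b
  proof -
    have "\<omega> a b = \<omega> (\<Sum>i\<in>Basis. (a \<bullet> i) *\<^sub>R i) (\<Sum>j\<in>Basis. (b \<bullet> j) *\<^sub>R j)"
      by (simp add: euclidean_representation)
    also have "\<dots> = (\<Sum>(i,j)\<in>Basis \<times> Basis. \<omega> ((a \<bullet> i) *\<^sub>R i) ((b \<bullet> j) *\<^sub>R j))"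
      by (rule bilinear_sum[OF bil])
    also have "\<dots> = (\<Sum>(i,j)\<in>Basis \<times> Basis. ((a \<bullet> i) * (b \<bullet> j)) *\<^sub>R \<omega> i j)"
      by (rule sum.cong) (auto simp: bilinear_lmul[OF bil] bilinear_rmul[OF bil])
    finally show ?thesis .
  qed
  have MLrel: "\<omega> (M a) (M b) = L (\<omega> a b)" for a b
  proof -
    have "\<omega> (M a) (M b) = (\<Sum>(i,j)\<in>Basis \<times> Basis. \<omega> ((a \<bullet> i) *\<^sub>R f i) ((b \<bullet> j) *\<^sub>R f j))"
      unfolding M_def by (rule bilinear_sum[OF bil])
    also have "\<dots> = (\<Sum>(i,j)\<in>Basis \<times> Basis. ((a \<bullet> i) * (b \<bullet> j)) *\<^sub>R L (\<omega> i j))"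
      by (rule sum.cong) (auto simp: bilinear_lmul[OF bil] bilinear_rmul[OF bil] rel LA)
    also have "\<dots> = L (\<Sum>(i,j)\<in>Basis \<times> Basis. ((a \<bullet> i) * (b \<bullet> j)) *\<^sub>R \<omega> i j)"
      by (simp add: linear_sum[OF linL] linear_cmul[OF linL] case_prod_unfold)
    also have "\<dots> = L (\<omega> a b)" by (simp only: expand[of a b, symmetric])
    finally show ?thesis .
  qed
  obtain k0 where k0: "k0 \<in> Basis" "\<phi> k0 \<noteq> 0" using nz by blast
  have injM: "inj M"
    unfolding linear_injective_0[OF linM]
  proof (intro allI impI)
    fix a assume Ma: "M a = 0"
    show "a = 0"
    proof (rule ccontr)
      assume "a \<noteq> 0"
      then obtain b where "\<omega> a b = k0" using E by blast
      then have "L k0 = \<omega> (M a) (M b)" using MLrel by simp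
      also have "\<dots> = 0" using Ma bilinear_lzero[OF bil] by simp
      finally show False using Lb[OF k0(1)] k0(2) by simp
    qed
  qed
  have surjM: "surj M" using linear_inj_imp_surj[OF linM injM] .
  obtain i0 where i0: "i0 \<in> Basis" "\<forall>k\<in>Basis. \<exists>j\<in>Basis. \<omega> i0 j = k" using B by blast
  have i0nz: "i0 \<noteq> 0" using i0(1) by auto
  have surjL: "surj L"
  proof -
    have "z \<in> range L" for z
    proof -
      obtain b where b: "\<omega> i0 b = z" using E[OF i0nz] by blast
      obtain a' where a': "i0 = M a'" using surjM by (metis surjD)
      obtain b' where b': "b = M b'" using surjM by (metis surjD)
      have "z = L (\<omega> a' b')" using MLrel a' b' b by simp
      then show ?thesis by simp
    qed
    then show ?thesis by blast
  qed
  have injL: "inj L" using linear_surj_imp_inj[OF linL surjL] .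
  have Lnz: "\<phi> k \<noteq> 0" if "k \<in> Basis" for k
  proof
    assume "\<phi> k = 0"
    then have "L k = L 0" using Lb[OF that] linear_0[OF linL] by simp
    then have "k = 0" using injL by (meson injD)
    then show False using that by auto
  qed
  have fnz: "f i \<noteq> 0" if "i \<in> Basis" for i
  proof
    assume "f i = 0"
    then have "M i = M 0" using Mb[OF that] linear_0[OF linM] by simp
    then have "i = 0" using injM by (meson injD)
    then show False using that by auto
  qed
  have scal: "\<exists>c. f (t *\<^sub>R i) = c *\<^sub>R f i" if i: "i \<in> Basis" for i t
  proof -
    obtain w' where w': "f (t *\<^sub>R i) = M w'" using surjM by (metis surjD)
    have "\<forall>j\<in>Basis. \<omega> i j = 0 \<longrightarrow> \<omega> w' j = 0"
    proof (intro ballI impI)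
      fix j assume j: "j \<in> Basis" and ij: "\<omega> i j = 0"
      have "L (\<omega> w' j) = \<omega> (M w') (M j)" using MLrel by simp
      also have "\<dots> = \<omega> (f (t *\<^sub>R i)) (f j)" using w' Mb[OF j] by simp
      also have "\<dots> = \<phi> (\<omega> (t *\<^sub>R i) j)" by (rule rel)
      also have "\<dots> = 0" using ij p0 bilinear_lmul[OF bil] by simp
      finally have "L (\<omega> w' j) = L 0" using linear_0[OF linL] by simp
      then show "\<omega> w' j = 0" using injL by (meson injD)
    qed
    then obtain c where "w' = c *\<^sub>R i" using D[OF i] by blast
    then have "f (t *\<^sub>R i) = c *\<^sub>R f i" using w' linear_cmul[OF linM] Mb[OF i] by simp
    then show ?thesis by blast
  qed
  define cc where "cc i t = (SOME c. f (t *\<^sub>R i) = c *\<^sub>R f i)" for i t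
  have cc: "f (t *\<^sub>R i) = cc i t *\<^sub>R f i" if "i \<in> Basis" for i t
    unfolding cc_def using someI_ex[OF scal[OF that]] .
  define c where "c = cc i0"
  have pk: "\<phi> (t *\<^sub>R k) = c t *\<^sub>R \<phi> k" if k: "k \<in> Basis" for t k
  proof -
    obtain j where j: "j \<in> Basis" "\<omega> i0 j = k" using i0 k by blast
    have "\<phi> (t *\<^sub>R k) = \<phi> (\<omega> (t *\<^sub>R i0) j)" using j bilinear_lmul[OF bil] by simp
    also have "\<dots> = \<omega> (f (t *\<^sub>R i0)) (f j)" by (rule rel[symmetric])
    also have "\<dots> = c t *\<^sub>R \<omega> (f i0) (f j)" using cc[OF i0(1)] bilinear_lmul[OF bil] c_def by simp
    also have "\<dots> = c t *\<^sub>R \<phi> k" using rel j by simp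
    finally show ?thesis .
  qed
  have cci: "cc i t = c t" if i: "i \<in> Basis" for i t
  proof -
    have "\<exists>j\<in>Basis. \<omega> i j \<noteq> 0"
    proof (rule ccontr)
      assume "\<not> (\<exists>j\<in>Basis. \<omega> i j \<noteq> 0)"
      then have z: "\<omega> i j = 0" if "j \<in> Basis" for j using that by blast
      obtain b where b: "\<omega> i b = k0" using E i by (metis nonzero_Basis)
      have "\<omega> i b = (\<Sum>(i',j)\<in>Basis \<times> Basis. ((i \<bullet> i') * (b \<bullet> j)) *\<^sub>R \<omega> i' j)" by (rule expand)
      also have "\<dots> = 0"
        by (rule sum.neutral) (auto simp: inner_Basis z i)
      finally show False using b k0(1) by auto
    qed
    then obtain j where j: "j \<in> Basis" "\<omega> i j \<noteq> 0" by blast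
    have eq: "cc i t *\<^sub>R \<phi> (\<omega> i j) = \<phi> (t *\<^sub>R \<omega> i j)"
    proof -
      have "cc i t *\<^sub>R \<phi> (\<omega> i j) = \<omega> (f (t *\<^sub>R i)) (f j)"
        using cc[OF i] rel bilinear_lmul[OF bil] by simp
      also have "\<dots> = \<phi> (t *\<^sub>R \<omega> i j)" using rel bilinear_lmul[OF bil] by simp
      finally show ?thesis .
    qed
    from A[OF i j(1)] j(2) consider "\<omega> i j \<in> Basis" | "- \<omega> i j \<in> Basis" by blast
    then show ?thesis
    proof cases
      case 1
      then have "cc i t *\<^sub>R \<phi> (\<omega> i j) = c t *\<^sub>R \<phi> (\<omega> i j)" using eq pk by simp
      then show ?thesis using Lnz[OF 1] by simp
    next
      case 2
      have "\<phi> (t *\<^sub>R \<omega> i j) = - \<phi> (t *\<^sub>R (- \<omega> i j))" using pneg by simp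
      also have "\<dots> = - (c t *\<^sub>R \<phi> (- \<omega> i j))" using pk[OF 2] by simp
      finally have "cc i t *\<^sub>R \<phi> (- \<omega> i j) = c t *\<^sub>R \<phi> (- \<omega> i j)" using eq pneg by simp
      then show ?thesis using Lnz[OF 2] by simp
    qed
  qed
  have fi0: "f i0 \<noteq> 0" using fnz[OF i0(1)] .
  have cadd: "c (x + y) = c x + c y" for x y
  proof -
    have "c (x + y) *\<^sub>R f i0 = f ((x + y) *\<^sub>R i0)" using cc[OF i0(1)] c_def by simp
    also have "\<dots> = f (x *\<^sub>R i0) + f (y *\<^sub>R i0)" using fadd by (simp add: scaleR_add_left)
    also have "\<dots> = (c x + c y) *\<^sub>R f i0" using cc[OF i0(1)] c_def by (simp add: scaleR_add_left)
    finally show ?thesis using fi0 by simp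
  qed
  have cone: "c 1 = 1"
  proof -
    have "f i0 = c 1 *\<^sub>R f i0" using cc[OF i0(1), of 1] c_def by simp
    then have "(c 1 - 1) *\<^sub>R f i0 = 0" by (simp add: algebra_simps)
    then show ?thesis using fi0 by simp
  qed
  have cmult: "c (x * y) = c x * c y" for x y
  proof -
    obtain j where j: "j \<in> Basis" "\<omega> i0 j = k0" using i0 k0 by blast
    have "c (x * y) *\<^sub>R \<phi> k0 = \<phi> ((x * y) *\<^sub>R k0)" using pk[OF k0(1)] by simp
    also have "\<dots> = \<phi> (\<omega> (x *\<^sub>R i0) (y *\<^sub>R j))"
      using j bilinear_lmul[OF bil] bilinear_rmul[OF bil] by (simp add: mult.commute)
    also have "\<dots> = \<omega> (f (x *\<^sub>R i0)) (f (y *\<^sub>R j))" by (rule rel[symmetric])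
    also have "\<dots> = (c x * c y) *\<^sub>R \<omega> (f i0) (f j)"
      using cc[OF i0(1)] cc[OF j(1)] cci[OF j(1)] c_def bilinear_lmul[OF bil] bilinear_rmul[OF bil] by simp
    also have "\<dots> = (c x * c y) *\<^sub>R \<phi> k0" using rel j by simp
    finally show ?thesis using k0(2) by simp
  qed
  have cid: "c x = x" for x by (rule ring_hom_real_id[OF cadd cmult cone])
  have fM: "f = M"
  proof
    fix a
    have "f a = f (\<Sum>i\<in>Basis. (a \<bullet> i) *\<^sub>R i)" by (simp add: euclidean_representation)
    also have "\<dots> = (\<Sum>i\<in>Basis. f ((a \<bullet> i) *\<^sub>R i))" by (rule additive_sum[OF fadd])
    also have "\<dots> = M a" unfolding M_def
      by (rule sum.cong) (auto simp: cc cci cid)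
    finally show "f a = M a" .
  qed
  have pL: "\<phi> = L"
  proof
    fix z
    have "\<phi> z = \<phi> (\<Sum>k\<in>Basis. (z \<bullet> k) *\<^sub>R k)" by (simp add: euclidean_representation)
    also have "\<dots> = (\<Sum>k\<in>Basis. \<phi> ((z \<bullet> k) *\<^sub>R k))" by (rule additive_sum[OF padd])
    also have "\<dots> = L z" unfolding L_def
      by (rule sum.cong) (auto simp: pk cid)
    finally show "\<phi> z = L z" .
  qed
  show ?thesis using linM linL injM surjM injL surjL fM pL by (simp add: bij_def)
qed



definition fpart :: "('v::zero \<times> 'z::zero \<Rightarrow> 'v \<times> 'z) \<Rightarrow> 'v \<Rightarrow> 'v" where
  "fpart F v = fst (F (v, 0))"
definition spart :: "('v::zero \<times> 'z::zero \<Rightarrow> 'v \<times> 'z) \<Rightarrow> 'v \<Rightarrow> 'z" where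
  "spart F v = snd (F (v, 0))"
definition cpart :: "('v::zero \<times> 'z::zero \<Rightarrow> 'v \<times> 'z) \<Rightarrow> 'z \<Rightarrow> 'z" where
  "cpart F z = snd (F (0, z))"

lemma half_half: "(1/2) *\<^sub>R x + (1/2) *\<^sub>R x = (x::'a::real_vector)"
  by (subst scaleR_add_left[symmetric]) simp

lemma neg_self: "(x::'a::real_vector) = - x \<Longrightarrow> x = 0"
proof -
  assume "x = - x"
  then have "x + x = 0" by (metis add.right_inverse)
  then have "(2::real) *\<^sub>R x = 0" by (simp add: scaleR_2)
  then show "x = 0" by simp
qed

lemma Ck_const: "Ck k (\<lambda>x::'a::euclidean_space. c::'b::euclidean_space)"
  by (induction k arbitrary: c) (auto simp: continuous_on_const)

lemma Ck_linear:
  fixes g :: "'a::euclidean_space \<Rightarrow> 'b::euclidean_space"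
  assumes "linear g" shows "Ck k g"
proof (cases k)
  case 0
  then show ?thesis using assms by (simp add: linear_continuous_on linear_conv_bounded_linear)
next
  case (Suc m)
  have fd: "frechet_derivative g (at x) = g" for x
    using frechet_derivative_at[OF linear_imp_has_derivative[OF assms]] by simp
  show ?thesis using Suc assms by (simp add: fd Ck_const linear_imp_differentiable)
qed

lemma diffeo_linear:
  fixes g :: "'a::euclidean_space \<Rightarrow> 'a"
  assumes "linear g" "bij g" shows "diffeo g"
proof -
  have "linear (inv g)" using inj_linear_imp_inv_linear assms bij_is_inj by blast
  then show ?thesis using assms by (simp add: diffeo_def smooth_def Ck_linear)
qed

context
  fixes \<omega> :: "'v::euclidean_space \<Rightarrow> 'v \<Rightarrow> 'z::euclidean_space"
  assumes bil: "bilinear \<omega>" and skew: "\<And>a b. \<omega> a b = - \<omega> b a"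
    and E: "\<And>a z. a \<noteq> 0 \<Longrightarrow> \<exists>b. \<omega> a b = z"
begin

lemma om0: "\<omega> x 0 = 0" "\<omega> 0 x = 0"
  using bilinear_rzero[OF bil] bilinear_lzero[OF bil] by auto

lemma center_char: "ncenter \<omega> = {c. fst c = 0}"
proof (intro set_eqI iffI)
  fix c :: "'v \<times> 'z" assume c: "c \<in> ncenter \<omega>"
  show "c \<in> {c. fst c = 0}"
  proof (rule ccontr)
    assume "c \<notin> {c. fst c = 0}"
    then have ne: "fst c \<noteq> 0" by simp
    obtain k :: 'z where k: "k \<in> Basis" using nonempty_Basis by blast
    obtain b where b: "\<omega> (fst c) b = k" using E[OF ne] by blast
    have "nmul \<omega> c (b, 0) = nmul \<omega> (b, 0) c" using c by (simp add: ncenter_def)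
    then have "\<omega> (fst c) b = \<omega> b (fst c)" by (simp add: nmul_def algebra_simps)
    then have "\<omega> (fst c) b = 0" using skew[of b "fst c"] neg_self by simp
    then show False using b k by auto
  qed
next
  fix c :: "'v \<times> 'z" assume "c \<in> {c. fst c = 0}"
  then show "c \<in> ncenter \<omega>" by (simp add: ncenter_def nmul_def om0 add.commute)
qed

context
  fixes F :: "'v \<times> 'z \<Rightarrow> 'v \<times> 'z"
  assumes hom: "nhom \<omega> F"
begin

lemma homF: "F (nmul \<omega> a b) = nmul \<omega> (F a) (F b)"
  using hom unfolding nhom_def by blast

lemma Fv0: "F (v, 0) = (fpart F v, spart F v)"
  by (simp add: fpart_def spart_def)

lemma comm: "F (0, \<omega> a b) = (0, \<omega> (fpart F a) (fpart F b))"
proof -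
  have e: "nmul \<omega> (a,0) (b,0) = nmul \<omega> (nmul \<omega> (b,0) (a,0)) (0, \<omega> a b)"
    using skew[of b a] by (simp add: nmul_def om0 algebra_simps half_half)
  obtain c1 c2 where C: "F (0, \<omega> a b) = (c1, c2)" by fastforce
  let ?p1 = "fpart F a" and ?p2 = "spart F a" and ?q1 = "fpart F b" and ?q2 = "spart F b"
  have "nmul \<omega> (?p1, ?p2) (?q1, ?q2) = nmul \<omega> (nmul \<omega> (?q1, ?q2) (?p1, ?p2)) (c1, c2)"
    using e homF[of "(a,0)" "(b,0)"] homF[of "nmul \<omega> (b,0) (a,0)" "(0, \<omega> a b)"]
      homF[of "(b,0)" "(a,0)"] C Fv0 by metis
  then have eq1: "?p1 + ?q1 = ?q1 + ?p1 + c1"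
    and eq2: "?p2 + ?q2 + (1/2) *\<^sub>R \<omega> ?p1 ?q1 = ?q2 + ?p2 + (1/2) *\<^sub>R \<omega> ?q1 ?p1 + c2 + (1/2) *\<^sub>R \<omega> (?q1 + ?p1) c1"
    by (simp_all add: nmul_def)
  from eq1 have c1: "c1 = 0" by simp
  from eq2 have "c2 = (1/2) *\<^sub>R \<omega> ?p1 ?q1 - (1/2) *\<^sub>R \<omega> ?q1 ?p1"
    by (simp add: c1 om0 algebra_simps)
  also have "\<dots> = \<omega> ?p1 ?q1" using skew[of ?q1 ?p1] by (simp add: half_half)
  finally show ?thesis using C c1 by simp
qed

lemma fst0: "fst (F (0, z)) = 0"
proof -
  obtain i :: 'v where i: "i \<in> Basis" using nonempty_Basis by blast
  then have "i \<noteq> 0" by auto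
  then obtain b where "\<omega> i b = z" using E by blast
  then show ?thesis using comm[of i b] by simp
qed

lemma F0z: "F (0, z) = (0, cpart F z)"
  using fst0[of z] by (simp add: cpart_def prod_eq_iff)

lemma cpart_rel: "cpart F (\<omega> a b) = \<omega> (fpart F a) (fpart F b)"
  using comm[of a b] by (simp add: cpart_def)

lemma decompF: "F (v, z) = (fpart F v, spart F v + cpart F z)"
proof -
  have "(v, z) = nmul \<omega> (v, 0) (0, z)" by (simp add: nmul_def om0)
  then have "F (v, z) = nmul \<omega> (F (v, 0)) (F (0, z))" using homF by metis
  then show ?thesis by (simp add: Fv0 F0z nmul_def om0)
qed

lemma fpart_add: "fpart F (a + b) = fpart F a + fpart F b"
proof -
  have "F (nmul \<omega> (a,0) (b,0)) = nmul \<omega> (F (a,0)) (F (b,0))" by (rule homF)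
  then show ?thesis by (simp add: nmul_def decompF)
qed

lemma cpart_add: "cpart F (x + y) = cpart F x + cpart F y"
proof -
  have "F (nmul \<omega> (0,x) (0,y)) = nmul \<omega> (F (0,x)) (F (0,y))" by (rule homF)
  then show ?thesis by (simp add: nmul_def F0z om0)
qed

lemma cpart0: "cpart F 0 = 0"
  by (rule additive_zero[of "cpart F", OF cpart_add])

lemma spart_rel: "spart F (a + b) + cpart F ((1/2) *\<^sub>R \<omega> a b) = spart F a + spart F b + (1/2) *\<^sub>R \<omega> (fpart F a) (fpart F b)"
proof -
  have "F (nmul \<omega> (a,0) (b,0)) = nmul \<omega> (F (a,0)) (F (b,0))" by (rule homF)
  then show ?thesis by (simp add: nmul_def decompF cpart0)
qed

lemma assemble:
  assumes lf: "linear (fpart F)" and bf: "bij (fpart F)"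
    and lc: "linear (cpart F)" and bc: "bij (cpart F)"
  shows "cor_concl \<omega> F"
proof -
  define f where "f = fpart F"
  define s where "s = spart F"
  define \<phi> where "\<phi> = cpart F"
  note defs = f_def[symmetric] s_def[symmetric] \<phi>_def[symmetric]
  have Fvz: "F (v, z) = (f v, s v + \<phi> z)" for v z using decompF by (simp add: defs)
  have rel: "\<phi> (\<omega> a b) = \<omega> (f a) (f b)" for a b using cpart_rel by (simp add: defs)
  have sadd: "s (a + b) = s a + s b" for a b
  proof -
    have "\<phi> ((1/2) *\<^sub>R \<omega> a b) = (1/2) *\<^sub>R \<omega> (f a) (f b)"
      using linear_cmul[OF lc] rel by (simp add: defs)
    then show ?thesis using spart_rel[of a b] by (simp add: defs)
  qed
  have s0: "s 0 = 0" by (rule additive_zero[of s, OF sadd])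
  have f0: "f 0 = 0" using linear_0[OF lf] by (simp add: defs)
  have p0: "\<phi> 0 = 0" using linear_0[OF lc] by (simp add: defs)
  define g where "g = inv f"
  have injf: "inj f" and surjf: "surj f" using bf by (auto simp: defs bij_def)
  have lg: "linear g" unfolding g_def using inj_linear_imp_inv_linear[OF _ injf] lf by (simp add: defs)
  have gf: "g (f v) = v" for v unfolding g_def using inv_f_f[OF injf] .
  have fg: "f (g u) = u" for u unfolding g_def using surj_f_inv_f[OF surjf] .
  have injp: "inj \<phi>" and surjp: "surj \<phi>" using bc by (auto simp: defs bij_def)
  define Fb where "Fb x = (f (fst x), \<phi> (snd x))" for x
  define mu where "mu x = (fst x, snd x + s (g (fst x)))" for x
  have Fcomp: "F = mu \<circ> Fb"
  proof
    fix x show "F x = (mu \<circ> Fb) x"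
      by (cases x) (simp add: Fvz mu_def Fb_def gf add.commute)
  qed
  have homFb: "nhom \<omega> Fb"
    unfolding nhom_def
  proof (intro allI)
    fix a b :: "'v \<times> 'z"
    have "\<phi> (snd a + snd b + (1/2) *\<^sub>R \<omega> (fst a) (fst b)) = \<phi> (snd a) + \<phi> (snd b) + (1/2) *\<^sub>R \<omega> (f (fst a)) (f (fst b))"
      using linear_add[OF lc] linear_cmul[OF lc] rel by (simp add: defs)
    then show "Fb (nmul \<omega> a b) = nmul \<omega> (Fb a) (Fb b)"
      using linear_add[OF lf] by (simp add: Fb_def nmul_def defs)
  qed
  have bijFb: "bij Fb"
  proof (rule bijI)
    show "inj Fb"
    proof (rule injI)
      fix x y assume "Fb x = Fb y"
      then have "f (fst x) = f (fst y)" "\<phi> (snd x) = \<phi> (snd y)" by (auto simp: Fb_def)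
      then show "x = y" using injf injp by (simp add: inj_eq prod_eq_iff)
    qed
    show "surj Fb"
    proof (rule surjI)
      fix y :: "'v \<times> 'z"
      show "Fb (g (fst y), inv \<phi> (snd y)) = y" by (simp add: Fb_def fg surj_f_inv_f[OF surjp])
    qed
  qed
  have linFb: "linear Fb"
    unfolding linear_iff Fb_def using lf lc by (simp add: defs linear_add linear_cmul)
  have contFb: "continuous_on UNIV Fb"
    using linFb by (simp add: linear_continuous_on linear_conv_bounded_linear)
  have homMu: "nhom \<omega> mu"
    unfolding nhom_def
  proof (intro allI)
    fix a b :: "'v \<times> 'z"
    show "mu (nmul \<omega> a b) = nmul \<omega> (mu a) (mu b)"
      using linear_add[OF lg] sadd by (simp add: mu_def nmul_def algebra_simps)
  qed
  have bijMu: "bij mu"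
  proof (rule bijI)
    show "inj mu"
    proof (rule injI)
      fix x y assume "mu x = mu y"
      then show "x = y" by (auto simp: mu_def prod_eq_iff)
    qed
    show "surj mu"
    proof (rule surjI)
      fix y :: "'v \<times> 'z"
      show "mu (fst y, snd y - s (g (fst y))) = y" by (simp add: mu_def)
    qed
  qed
  have centMu: "nmul \<omega> (ninv x) (mu x) \<in> ncenter \<omega>" for x
    by (simp add: center_char nmul_def ninv_def mu_def)
  have nautF: "naut \<omega> F"
    using hom bijFb bijMu Fcomp by (simp add: naut_def bij_comp)
  have F0: "F (0, z) = (0, \<phi> z)" for z using Fvz f0 s0 by simp
  have bbF: "bij_betw F (ncenter \<omega>) (ncenter \<omega>)"
    unfolding bij_betw_def center_char
  proof
    show "inj_on F {c. fst c = 0}"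
    proof (rule inj_onI)
      fix x y assume "x \<in> {c. fst c = 0}" "y \<in> {c. fst c = 0}" "F x = F y"
      then show "x = y" using F0 injp by (cases x, cases y) (auto simp: inj_eq)
    qed
    show "F ` {c. fst c = 0} = {c. fst c = 0}"
    proof (intro set_eqI iffI)
      fix y assume "y \<in> F ` {c. fst c = 0}"
      then show "y \<in> {c. fst c = 0}" using F0 by auto
    next
      fix y :: "'v \<times> 'z" assume y: "y \<in> {c. fst c = 0}"
      have "F (0, inv \<phi> (snd y)) = y" using F0 y surj_f_inv_f[OF surjp] by (cases y) auto
      then show "y \<in> F ` {c. fst c = 0}" using rev_image_eqI[of "(0, inv \<phi> (snd y))" "{c. fst c = 0}" y F] by simp
    qed
  qed
  have dh: "diffeo \<phi>" using diffeo_linear lc bc by (simp add: defs)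
  have dg: "diffeo f" using diffeo_linear lf bf by (simp add: defs)
  show ?thesis
    unfolding cor_concl_def
  proof (intro conjI)
    show "naut \<omega> F" by (rule nautF)
    show "\<exists>\<mu> Fbar. central_aut \<omega> \<mu> \<and> lie_aut \<omega> Fbar \<and> F = \<mu> \<circ> Fbar"
      using homMu bijMu centMu homFb bijFb contFb Fcomp
      by (auto simp: central_aut_def lie_aut_def naut_def)
    show "bij_betw F (ncenter \<omega>) (ncenter \<omega>)" by (rule bbF)
    show "\<exists>h. diffeo h \<and> (\<forall>x\<in>ncenter \<omega>. snd (F x) = h (snd x))"
      using dh F0 by (auto simp: center_char)
    show "\<exists>g. diffeo g \<and> (\<forall>x. fst (F x) = g (fst x))"
      using dg Fvz by (metis prod.collapse fst_conv)
  qed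
qed

end
end



lemma main_inj:
  fixes \<omega> :: "'v::euclidean_space \<Rightarrow> 'v \<Rightarrow> 'z::euclidean_space"
  assumes bil: "bilinear \<omega>" and skew: "\<And>a b. \<omega> a b = - \<omega> b a"
    and A: "\<And>i j. i \<in> Basis \<Longrightarrow> j \<in> Basis \<Longrightarrow> \<omega> i j = 0 \<or> \<omega> i j \<in> Basis \<or> - \<omega> i j \<in> Basis"
    and B: "\<exists>i0\<in>Basis. \<forall>k\<in>Basis. \<exists>j\<in>Basis. \<omega> i0 j = k"
    and D: "\<And>i w. i \<in> Basis \<Longrightarrow> (\<forall>j\<in>Basis. \<omega> i j = 0 \<longrightarrow> \<omega> w j = 0) \<Longrightarrow> \<exists>c. w = c *\<^sub>R i"
    and E: "\<And>a z. a \<noteq> 0 \<Longrightarrow> \<exists>b. \<omega> a b = z"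
    and hom: "nhom \<omega> F" and inj: "inj_on F (ncenter \<omega>)"
  shows "cor_concl \<omega> F"
proof -
  obtain k :: 'z where k: "k \<in> Basis" using nonempty_Basis by blast
  have "cpart F k \<noteq> 0"
  proof
    assume c: "cpart F k = 0"
    have "F (0, k) = F (0, 0)" using F0z[OF bil skew E hom] c cpart0[OF bil skew E hom] by simp
    moreover have "(0, k) \<in> ncenter \<omega>" "(0, 0::'z) \<in> ncenter \<omega>" using center_char[OF bil skew E] by auto
    ultimately have "(0::'v, k) = (0, 0)" using inj by (meson inj_onD)
    then show False using k by auto
  qed
  then have nz: "\<exists>k\<in>Basis. cpart F k \<noteq> 0" using k by blast
  have "linear (fpart F) \<and> bij (fpart F) \<and> linear (cpart F) \<and> bij (cpart F)"
    by (rule core[of \<omega> "fpart F" "cpart F", OF bil A B D E fpart_add[OF bil skew E hom] cpart_add[OF bil skew E hom]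
          cpart_rel[OF bil skew E hom, symmetric] nz])
  then show ?thesis using assemble[OF bil skew E hom] by blast
qed

lemma heis_bil: "bilinear heis_form"
  unfolding bilinear_def heis_form_def
  by (auto simp: linear_iff inner_add_left inner_add_right algebra_simps)

lemma heis_skew: "heis_form a b = - heis_form b a"
  by (simp add: heis_form_def inner_commute)

lemma heis_E:
  assumes "a \<noteq> 0" shows "\<exists>b. heis_form a b = z"
proof -
  obtain x y where a: "a = (x, y)" by fastforce
  have pos: "x \<bullet> x + y \<bullet> y \<noteq> 0" using assms a
    by (metis add_nonneg_eq_0_iff inner_eq_zero_iff inner_ge_zero prod.sel zero_prod_def)
  define c where "c = z / (x \<bullet> x + y \<bullet> y)"
  have "heis_form a (c *\<^sub>R (- y), c *\<^sub>R x) = c * (x \<bullet> x + y \<bullet> y)"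
    by (simp add: heis_form_def a algebra_simps)
  also have "\<dots> = z" using pos by (simp add: c_def)
  finally show ?thesis by blast
qed

lemma Basis_prod_cases:
  assumes "(i :: 'a::euclidean_space \<times> 'b::euclidean_space) \<in> Basis"
  obtains u where "u \<in> Basis" "i = (u, 0)" | v where "v \<in> Basis" "i = (0, v)"
  using assms by (auto simp: Basis_prod_def)

lemma Basis_vec_cases:
  assumes "(v :: real^'n) \<in> Basis"
  obtains k where "v = axis k 1"
  using axis_inverse[OF assms] by blast

lemma heis_basis_cases:
  assumes "(i :: (real^'n) \<times> (real^'n)) \<in> Basis"
  obtains k where "i = (axis k 1, 0)" | k where "i = (0, axis k 1)"
  using assms by (auto elim!: Basis_prod_cases Basis_vec_cases)

lemma heis_A:
  assumes "(i :: (real^'n) \<times> (real^'n)) \<in> Basis" "j \<in> Basis"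
  shows "heis_form i j = 0 \<or> heis_form i j \<in> Basis \<or> - heis_form i j \<in> Basis"
  using assms
  by (auto elim!: heis_basis_cases simp: heis_form_def inner_axis_axis inner_real_def split: if_split_asm)

lemma heis_B: "\<exists>i0\<in>(Basis :: ((real^'n) \<times> (real^'n)) set). \<forall>k\<in>Basis. \<exists>j\<in>Basis. heis_form i0 j = k"
proof -
  obtain k0 :: 'n where True by blast
  have "(axis k0 1, 0) \<in> (Basis :: ((real^'n) \<times> (real^'n)) set)" "(0, axis k0 1) \<in> (Basis :: ((real^'n) \<times> (real^'n)) set)"
    by (auto simp: Basis_prod_def)
  moreover have "heis_form (axis k0 1, 0) (0, axis k0 1) = (1::real)"
    by (simp add: heis_form_def inner_axis_axis)
  ultimately show ?thesis by auto
qed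

lemma heis_D:
  assumes i: "(i :: (real^'n) \<times> (real^'n)) \<in> Basis"
    and h: "\<forall>j\<in>Basis. heis_form i j = 0 \<longrightarrow> heis_form w j = 0"
  shows "\<exists>c. w = c *\<^sub>R i"
proof -
  obtain x y where w: "w = (x, y)" by fastforce
  have inX: "(axis l 1, 0) \<in> (Basis :: ((real^'n) \<times> (real^'n)) set)" for l by (auto simp: Basis_prod_def)
  have inY: "(0, axis l 1) \<in> (Basis :: ((real^'n) \<times> (real^'n)) set)" for l by (auto simp: Basis_prod_def)
  from i show ?thesis
  proof (cases rule: heis_basis_cases)
    case (1 k)
    have y: "y $ l = 0" for l
      using h[rule_format, OF inX[of l]] by (simp add: 1 w heis_form_def inner_axis inner_axis')
    have x: "x $ l = 0" if "l \<noteq> k" for l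
    proof -
      have "axis k 1 $ l = (0::real)" using that by (simp add: axis_def)
      then show ?thesis using h[rule_format, OF inY[of l]] by (simp add: 1 w heis_form_def inner_axis inner_axis')
    qed
    have "w = (x $ k) *\<^sub>R i"
      using x y by (auto simp: 1 w vec_eq_iff axis_def)
    then show ?thesis by blast
  next
    case (2 k)
    have x: "x $ l = 0" for l
      using h[rule_format, OF inY[of l]] by (simp add: 2 w heis_form_def inner_axis inner_axis')
    have y: "y $ l = 0" if "l \<noteq> k" for l
    proof -
      have "axis k 1 $ l = (0::real)" using that by (simp add: axis_def)
      then show ?thesis using h[rule_format, OF inX[of l]] by (simp add: 2 w heis_form_def inner_axis inner_axis')
    qed
    have "w = (y $ k) *\<^sub>R i"
      using x y by (auto simp: 2 w vec_eq_iff axis_def)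
    then show ?thesis by blast
  qed
qed

lemma heis_main:
  fixes F :: "((real^'n) \<times> (real^'n)) \<times> real \<Rightarrow> ((real^'n) \<times> (real^'n)) \<times> real"
  assumes hom: "nhom heis_form F" and ex: "\<exists>z\<in>ncenter heis_form. F z \<noteq> nunit"
  shows "cor_concl heis_form F"
proof -
  note bil = heis_bil and skew = heis_skew and E = heis_E
  obtain z where z: "z \<in> ncenter heis_form" "F z \<noteq> nunit" using ex by blast
  have cc: "ncenter (heis_form :: (real^'n) \<times> (real^'n) \<Rightarrow> _ \<Rightarrow> real) = {c. fst c = 0}" by (rule center_char[OF bil skew]) (rule E)
  have "fst z = 0" using cc z by simp
  then obtain z2 where z2: "z = (0, z2)" by (metis prod.collapse)
  have cz: "cpart F z2 \<noteq> 0" using z z2 F0z[OF bil skew E hom, of z2] by (simp add: nunit_def)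
  have z2nz: "z2 \<noteq> 0" using cz cpart0[OF bil skew E hom] by auto
  define S :: "(real^'n) \<times> (real^'n) \<Rightarrow> (real^'n) \<times> (real^'n)" where "S v = (z2 *\<^sub>R fst v, snd v)" for v
  define Si :: "(real^'n) \<times> (real^'n) \<Rightarrow> (real^'n) \<times> (real^'n)" where "Si v = ((1/z2) *\<^sub>R fst v, snd v)" for v
  define f2 where "f2 = fpart F \<circ> S"
  define p2 where "p2 u = cpart F (z2 * u)" for u
  have Sadd: "S (a + b) = S a + S b" for a b by (simp add: S_def scaleR_add_right)
  have Som: "heis_form (S a) (S b) = z2 * heis_form a b" for a b
    by (simp add: S_def heis_form_def algebra_simps)
  have fadd: "f2 (a + b) = f2 a + f2 b" for a b
    by (simp add: f2_def Sadd fpart_add[OF bil skew E hom])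
  have padd: "p2 (a + b) = p2 a + p2 b" for a b
    by (simp add: p2_def distrib_left cpart_add[OF bil skew E hom])
  have rel: "heis_form (f2 a) (f2 b) = p2 (heis_form a b)" for a b
    by (simp add: f2_def p2_def cpart_rel[OF bil skew E hom, symmetric] Som)
  have nz: "\<exists>k\<in>Basis. p2 k \<noteq> 0" using cz by (simp add: p2_def)
  have res: "linear f2 \<and> bij f2 \<and> linear p2 \<and> bij p2"
    by (rule core[of heis_form f2 p2, OF bil heis_A heis_B heis_D E fadd padd rel nz])
  have SSi: "S (Si v) = v" "Si (S v) = v" for v using z2nz by (simp_all add: S_def Si_def)
  have fp: "fpart F = f2 \<circ> Si" by (rule ext) (simp add: f2_def SSi)
  have cp: "cpart F = p2 \<circ> (\<lambda>u. u / z2)" by (rule ext) (simp add: p2_def z2nz)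
  have linSi: "linear Si" by (simp add: linear_iff Si_def scaleR_add_right)
  have bijSi: "bij Si" by (rule o_bij[of S]) (auto simp: SSi)
  have lin2: "linear (\<lambda>u::real. u / z2)" by (simp add: linear_iff add_divide_distrib)
  have bij2: "bij (\<lambda>u::real. u / z2)" by (rule o_bij[of "\<lambda>u. z2 * u"]) (auto simp: z2nz)
  have "linear (fpart F)" unfolding fp using res linSi by (simp add: linear_compose)
  moreover have "bij (fpart F)" unfolding fp using res bijSi by (simp add: bij_comp)
  moreover have "linear (cpart F)" unfolding cp using res lin2 by (simp add: linear_compose)
  moreover have "bij (cpart F)" unfolding cp using res bij2 by (simp add: bij_comp)
  ultimately show ?thesis using assemble[OF bil skew E hom] by blast
qed



lemma quat_tuple: "quat_form (x,y,v,u) (x',y',v',u') =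
     ((x \<bullet> y' - y \<bullet> x') + (v \<bullet> u' - u \<bullet> v'),
      (x \<bullet> v' - v \<bullet> x') - (y \<bullet> u' - u \<bullet> y'),
      (x \<bullet> u' - u \<bullet> x') + (y \<bullet> v' - v \<bullet> y'))"
  by (simp add: quat_form_def)

lemma quat_bil: "bilinear quat_form"
  unfolding bilinear_def linear_iff
  by (auto simp: split_paired_all quat_tuple inner_add_left inner_add_right algebra_simps)

lemma quat_skew: "quat_form a b = - quat_form b a"
  by (cases a; cases b) (simp add: quat_tuple inner_commute)

lemma quat_E:
  fixes a :: "(real^'m) \<times> (real^'m) \<times> (real^'m) \<times> (real^'m)"
  assumes "a \<noteq> 0" shows "\<exists>b. quat_form a b = z"
proof -
  obtain x y v u where a: "a = (x, y, v, u)" by (cases a) auto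
  obtain z1 z2 z3 where z: "z = (z1, z2, z3)" by (cases z) auto
  define N where "N = x \<bullet> x + y \<bullet> y + v \<bullet> v + u \<bullet> u"
  have "a \<bullet> a = N" by (simp add: a N_def algebra_simps)
  then have "N \<noteq> 0" using assms by auto
  define c1 where "c1 = z1 / N"
  define c2 where "c2 = z2 / N"
  define c3 where "c3 = z3 / N"
  define b where "b = (- (c1 *\<^sub>R y) - c2 *\<^sub>R v - c3 *\<^sub>R u, c1 *\<^sub>R x + c2 *\<^sub>R u - c3 *\<^sub>R v,
                      - (c1 *\<^sub>R u) + c2 *\<^sub>R x + c3 *\<^sub>R y, c1 *\<^sub>R v - c2 *\<^sub>R y + c3 *\<^sub>R x)"
  have "quat_form a b = (c1 * N, c2 * N, c3 * N)"
    by (simp add: a b_def quat_tuple N_def inner_add_right inner_diff_right inner_commute algebra_simps)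
  also have "\<dots> = z" using \<open>N \<noteq> 0\<close> by (simp add: z c1_def c2_def c3_def)
  finally show ?thesis by blast
qed

lemma quat_basis_cases:
  assumes "(i :: (real^'m) \<times> (real^'m) \<times> (real^'m) \<times> (real^'m)) \<in> Basis"
  obtains k where "i = (axis k 1, 0, 0, 0)" | k where "i = (0, axis k 1, 0, 0)"
    | k where "i = (0, 0, axis k 1, 0)" | k where "i = (0, 0, 0, axis k 1)"
  using assms by (auto elim!: Basis_prod_cases Basis_vec_cases simp: zero_prod_def)

lemma quat_in_Basis:
  "(axis k 1, 0, 0, 0) \<in> (Basis :: ((real^'m) \<times> (real^'m) \<times> (real^'m) \<times> (real^'m)) set)"
  "(0, axis k 1, 0, 0) \<in> (Basis :: ((real^'m) \<times> (real^'m) \<times> (real^'m) \<times> (real^'m)) set)"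
  "(0, 0, axis k 1, 0) \<in> (Basis :: ((real^'m) \<times> (real^'m) \<times> (real^'m) \<times> (real^'m)) set)"
  "(0, 0, 0, axis k 1) \<in> (Basis :: ((real^'m) \<times> (real^'m) \<times> (real^'m) \<times> (real^'m)) set)"
  by (auto simp: Basis_prod_def zero_prod_def)

lemma r3_basis: "(k :: real \<times> real \<times> real) \<in> Basis \<longleftrightarrow> k = (1,0,0) \<or> k = (0,1,0) \<or> k = (0,0,1)"
  by (auto simp: Basis_prod_def zero_prod_def)

lemma quat_A:
  assumes "(i :: (real^'m) \<times> (real^'m) \<times> (real^'m) \<times> (real^'m)) \<in> Basis" "j \<in> Basis"
  shows "quat_form i j = 0 \<or> quat_form i j \<in> Basis \<or> - quat_form i j \<in> Basis"
  using assms
  by (auto elim!: quat_basis_cases simp: quat_tuple inner_axis_axis inner_real_def r3_basis zero_prod_def split: if_split_asm)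

lemma quat_B: "\<exists>i0\<in>(Basis :: ((real^'m) \<times> (real^'m) \<times> (real^'m) \<times> (real^'m)) set). \<forall>k\<in>Basis. \<exists>j\<in>Basis. quat_form i0 j = k"
proof -
  obtain k0 :: 'm where True by blast
  have "quat_form (axis k0 1, 0, 0, 0) (0, axis k0 1, 0, 0) = (1, 0, 0)"
    "quat_form (axis k0 1, 0, 0, 0) (0, 0, axis k0 1, 0) = (0, 1, 0)"
    "quat_form (axis k0 1, 0, 0, 0) (0, 0, 0, axis k0 1) = (0, 0, 1)"
    by (simp_all add: quat_tuple inner_axis_axis)
  then show ?thesis using quat_in_Basis[of k0] by (metis r3_basis)
qed

lemma quat_w:
  fixes x y v u :: "real^'m"
  shows "quat_form (x,y,v,u) (axis l 1,0,0,0) = (-(y$l), -(v$l), -(u$l))"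
    "quat_form (x,y,v,u) (0,axis l 1,0,0) = (x$l, u$l, -(v$l))"
    "quat_form (x,y,v,u) (0,0,axis l 1,0) = (-(u$l), x$l, y$l)"
    "quat_form (x,y,v,u) (0,0,0,axis l 1) = (v$l, -(y$l), x$l)"
  by (simp_all add: quat_tuple inner_axis inner_axis')

lemma quat_D:
  assumes i: "(i :: (real^'m) \<times> (real^'m) \<times> (real^'m) \<times> (real^'m)) \<in> Basis"
    and h: "\<forall>j\<in>Basis. quat_form i j = 0 \<longrightarrow> quat_form w j = 0"
  shows "\<exists>c. w = c *\<^sub>R i"
proof -
  obtain x y v u where w: "w = (x, y, v, u)" by (cases w) auto
  note hX = h[rule_format, OF quat_in_Basis(1)] and hY = h[rule_format, OF quat_in_Basis(2)]
    and hV = h[rule_format, OF quat_in_Basis(3)] and hW = h[rule_format, OF quat_in_Basis(4)]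
  have ax: "axis k 1 $ l = (0::real)" if "l \<noteq> k" for k l :: 'm using that by (simp add: axis_def)
  from i show ?thesis
  proof (cases rule: quat_basis_cases)
    case (1 k)
    have a: "y$l = 0 \<and> v$l = 0 \<and> u$l = 0" for l
      using hX[of l] by (simp add: 1 w quat_w quat_tuple inner_axis inner_real_def zero_prod_def)
    have b: "x$l = 0" if "l \<noteq> k" for l
      using hY[of l] that ax[of l k] by (simp add: 1 w quat_w quat_tuple inner_axis inner_axis_axis inner_real_def zero_prod_def)
    have "w = (x $ k) *\<^sub>R i"
      using a b by (auto simp: 1 w vec_eq_iff axis_def)
    then show ?thesis by blast
  next
    case (2 k)
    have a: "x$l = 0 \<and> v$l = 0 \<and> u$l = 0" for l
      using hY[of l] by (simp add: 2 w quat_w quat_tuple inner_axis inner_real_def zero_prod_def)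
    have b: "y$l = 0" if "l \<noteq> k" for l
      using hX[of l] that ax[of l k] by (simp add: 2 w quat_w quat_tuple inner_axis inner_axis_axis inner_real_def zero_prod_def)
    have "w = (y $ k) *\<^sub>R i"
      using a b by (auto simp: 2 w vec_eq_iff axis_def)
    then show ?thesis by blast
  next
    case (3 k)
    have a: "x$l = 0 \<and> y$l = 0 \<and> u$l = 0" for l
      using hV[of l] by (simp add: 3 w quat_w quat_tuple inner_axis inner_real_def zero_prod_def)
    have b: "v$l = 0" if "l \<noteq> k" for l
      using hX[of l] that ax[of l k] by (simp add: 3 w quat_w quat_tuple inner_axis inner_axis_axis inner_real_def zero_prod_def)
    have "w = (v $ k) *\<^sub>R i"
      using a b by (auto simp: 3 w vec_eq_iff axis_def)
    then show ?thesis by blast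
  next
    case (4 k)
    have a: "x$l = 0 \<and> y$l = 0 \<and> v$l = 0" for l
      using hW[of l] by (simp add: 4 w quat_w quat_tuple inner_axis inner_real_def zero_prod_def)
    have b: "u$l = 0" if "l \<noteq> k" for l
      using hX[of l] that ax[of l k] by (simp add: 4 w quat_w quat_tuple inner_axis inner_axis_axis inner_real_def zero_prod_def)
    have "w = (u $ k) *\<^sub>R i"
      using a b by (auto simp: 4 w vec_eq_iff axis_def)
    then show ?thesis by blast
  qed
qed



lemma exhaust_7:
  fixes x :: 7
  shows "x = 0 \<or> x = 1 \<or> x = 2 \<or> x = 3 \<or> x = 4 \<or> x = 5 \<or> x = 6"
proof (induct x)
  case (of_int z)
  then have "z = 0 \<or> z = 1 \<or> z = 2 \<or> z = 3 \<or> z = 4 \<or> z = 5 \<or> z = 6" by fastforce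
  then show ?case by (elim disjE) simp_all
qed

lemma forall_7: "(\<forall>i::7. P i) \<longleftrightarrow> P 0 \<and> P 1 \<and> P 2 \<and> P 3 \<and> P 4 \<and> P 5 \<and> P 6"
  by (metis exhaust_7)

lemma UNIV_7: "(UNIV :: 7 set) = {0, 1, 2, 3, 4, 5, 6}"
  using exhaust_7 by auto

lemma sum_7: "(\<Sum>i\<in>(UNIV :: 7 set). f i) = f 0 + f 1 + f 2 + f 3 + f 4 + f 5 + f 6"
  unfolding UNIV_7 by (simp add: add.assoc)

lemma oct_nth: "oct_form a b $ k =
     fst a * (snd b $ k) - (snd a $ k) * fst b
     - ((snd a $ (k-3)) * (snd b $ (k-2)) - (snd a $ (k-2)) * (snd b $ (k-3)))
     - ((snd a $ (k+1)) * (snd b $ (k+3)) - (snd a $ (k+3)) * (snd b $ (k+1)))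
     - ((snd a $ (k+2)) * (snd b $ (k-1)) - (snd a $ (k-1)) * (snd b $ (k+2)))"
  by (simp add: oct_form_def)

lemma oct_bil: "bilinear oct_form"
  unfolding bilinear_def linear_iff
  by (auto simp: vec_eq_iff oct_nth algebra_simps)

lemma oct_skew: "oct_form a b = - oct_form b a"
  by (simp add: vec_eq_iff oct_nth algebra_simps)

lemma oct_basis_cases:
  assumes "(i :: real \<times> (real^7)) \<in> Basis"
  obtains "i = (1, 0)" | k where "i = (0, axis k 1)"
  using assms by (auto simp: Basis_prod_def Basis_real_def dest!: axis_inverse)

lemma neg7: "(-1::7) = 6" "(-2::7) = 5" "(-3::7) = 4" "(-4::7) = 3" "(-5::7) = 2" "(-6::7) = 1"
  by simp_all

lemma big7: "(7::7) = 0" "(8::7) = 1" "(9::7) = 2" "(10::7) = 3" "(11::7) = 4" "(12::7) = 5"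
  by simp_all

lemma oct_tab:
  "oct_form (0, axis 0 1) (0, axis 0 1) = 0"
  "oct_form (0, axis 0 1) (0, axis 1 1) = - axis 3 1"
  "oct_form (0, axis 0 1) (0, axis 2 1) = - axis 6 1"
  "oct_form (0, axis 0 1) (0, axis 3 1) = axis 1 1"
  "oct_form (0, axis 0 1) (0, axis 4 1) = - axis 5 1"
  "oct_form (0, axis 0 1) (0, axis 5 1) = axis 4 1"
  "oct_form (0, axis 0 1) (0, axis 6 1) = axis 2 1"
  "oct_form (0, axis 1 1) (0, axis 0 1) = axis 3 1"
  "oct_form (0, axis 1 1) (0, axis 1 1) = 0"
  "oct_form (0, axis 1 1) (0, axis 2 1) = - axis 4 1"
  "oct_form (0, axis 1 1) (0, axis 3 1) = - axis 0 1"
  "oct_form (0, axis 1 1) (0, axis 4 1) = axis 2 1"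
  "oct_form (0, axis 1 1) (0, axis 5 1) = - axis 6 1"
  "oct_form (0, axis 1 1) (0, axis 6 1) = axis 5 1"
  "oct_form (0, axis 2 1) (0, axis 0 1) = axis 6 1"
  "oct_form (0, axis 2 1) (0, axis 1 1) = axis 4 1"
  "oct_form (0, axis 2 1) (0, axis 2 1) = 0"
  "oct_form (0, axis 2 1) (0, axis 3 1) = - axis 5 1"
  "oct_form (0, axis 2 1) (0, axis 4 1) = - axis 1 1"
  "oct_form (0, axis 2 1) (0, axis 5 1) = axis 3 1"
  "oct_form (0, axis 2 1) (0, axis 6 1) = - axis 0 1"
  "oct_form (0, axis 3 1) (0, axis 0 1) = - axis 1 1"
  "oct_form (0, axis 3 1) (0, axis 1 1) = axis 0 1"
  "oct_form (0, axis 3 1) (0, axis 2 1) = axis 5 1"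
  "oct_form (0, axis 3 1) (0, axis 3 1) = 0"
  "oct_form (0, axis 3 1) (0, axis 4 1) = - axis 6 1"
  "oct_form (0, axis 3 1) (0, axis 5 1) = - axis 2 1"
  "oct_form (0, axis 3 1) (0, axis 6 1) = axis 4 1"
  "oct_form (0, axis 4 1) (0, axis 0 1) = axis 5 1"
  "oct_form (0, axis 4 1) (0, axis 1 1) = - axis 2 1"
  "oct_form (0, axis 4 1) (0, axis 2 1) = axis 1 1"
  "oct_form (0, axis 4 1) (0, axis 3 1) = axis 6 1"
  "oct_form (0, axis 4 1) (0, axis 4 1) = 0"
  "oct_form (0, axis 4 1) (0, axis 5 1) = - axis 0 1"
  "oct_form (0, axis 4 1) (0, axis 6 1) = - axis 3 1"
  "oct_form (0, axis 5 1) (0, axis 0 1) = - axis 4 1"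
  "oct_form (0, axis 5 1) (0, axis 1 1) = axis 6 1"
  "oct_form (0, axis 5 1) (0, axis 2 1) = - axis 3 1"
  "oct_form (0, axis 5 1) (0, axis 3 1) = axis 2 1"
  "oct_form (0, axis 5 1) (0, axis 4 1) = axis 0 1"
  "oct_form (0, axis 5 1) (0, axis 5 1) = 0"
  "oct_form (0, axis 5 1) (0, axis 6 1) = - axis 1 1"
  "oct_form (0, axis 6 1) (0, axis 0 1) = - axis 2 1"
  "oct_form (0, axis 6 1) (0, axis 1 1) = - axis 5 1"
  "oct_form (0, axis 6 1) (0, axis 2 1) = axis 0 1"
  "oct_form (0, axis 6 1) (0, axis 3 1) = - axis 4 1"
  "oct_form (0, axis 6 1) (0, axis 4 1) = axis 3 1"
  "oct_form (0, axis 6 1) (0, axis 5 1) = axis 1 1"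
  "oct_form (0, axis 6 1) (0, axis 6 1) = 0"
  by (simp_all add: vec_eq_iff forall_7 oct_nth axis_def neg7 big7)

lemma oct_imag_A:
  "oct_form (0, axis i 1) (0, axis j 1) = 0 \<or> oct_form (0, axis i 1) (0, axis j 1) \<in> Basis
     \<or> - oct_form (0, axis i 1) (0, axis j 1) \<in> Basis"
  using exhaust_7[of i] exhaust_7[of j]
  by (elim disjE) (simp_all add: oct_tab)

lemma oct_real_imag: "oct_form (1, 0) (0, axis j 1) = axis j 1"
  by (simp add: vec_eq_iff oct_nth)

lemma oct_imag_real: "oct_form (0, axis j 1) (1, 0) = - axis j 1"
  by (simp add: vec_eq_iff oct_nth)

lemma oct_real_real: "oct_form (1, 0) (1, 0) = 0"
  by (simp add: vec_eq_iff oct_nth)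

lemma oct_A:
  assumes "(i :: real \<times> (real^7)) \<in> Basis" "j \<in> Basis"
  shows "oct_form i j = 0 \<or> oct_form i j \<in> Basis \<or> - oct_form i j \<in> Basis"
  using assms
  apply (auto elim!: oct_basis_cases simp: oct_real_imag oct_imag_real oct_real_real)
  using oct_imag_A by blast

lemma oct_in_Basis: "(1, 0) \<in> (Basis :: (real \<times> (real^7)) set)" "(0, axis k 1) \<in> (Basis :: (real \<times> (real^7)) set)"
  by (auto simp: Basis_prod_def)

lemma oct_B: "\<exists>i0\<in>(Basis :: (real \<times> (real^7)) set). \<forall>k\<in>Basis. \<exists>j\<in>Basis. oct_form i0 j = k"
proof -
  have "\<forall>k\<in>(Basis :: (real^7) set). \<exists>j\<in>Basis. oct_form (1, 0) j = k"
  proof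
    fix k :: "real^7" assume "k \<in> Basis"
    then obtain m where "k = axis m 1" by (metis axis_inverse)
    then show "\<exists>j\<in>Basis. oct_form (1, 0) j = k" using oct_real_imag oct_in_Basis by metis
  qed
  then show ?thesis using oct_in_Basis by blast
qed

lemma oct_D_imag:
  fixes w0 :: real and W :: "real^7"
  assumes "oct_form (w0, W) (0, axis j 1) = 0"
  shows "\<exists>c. (w0, W) = c *\<^sub>R (0, axis j 1)"
proof -
  have "w0 = 0 \<and> W = W $ j *\<^sub>R axis j 1"
    using assms exhaust_7[of j]
    by (elim disjE) (simp_all add: vec_eq_iff forall_7 oct_nth axis_def neg7 big7)
  then show ?thesis by auto
qed

lemma oct_D_real:
  fixes w0 :: real and W :: "real^7"
  assumes "oct_form (w0, W) (1, 0) = 0"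
  shows "\<exists>c. (w0, W) = c *\<^sub>R (1, 0)"
proof -
  have "W = 0" using assms by (simp add: vec_eq_iff oct_nth)
  then show ?thesis by auto
qed

lemma oct_D:
  assumes i: "(i :: real \<times> (real^7)) \<in> Basis"
    and h: "\<forall>j\<in>Basis. oct_form i j = 0 \<longrightarrow> oct_form w j = 0"
  shows "\<exists>c. w = c *\<^sub>R i"
proof -
  obtain w0 W where w: "w = (w0, W)" by fastforce
  have "oct_form i i = 0" using neg_self[OF oct_skew[of i i]] .
  then have "oct_form w i = 0" using h i by blast
  then show ?thesis using i w oct_D_imag oct_D_real by (auto elim!: oct_basis_cases)
qed

definition cr7 :: "real^7 \<Rightarrow> real^7 \<Rightarrow> real^7" where
  "cr7 A B = (\<chi> k. (A $ (k-3)) * (B $ (k-2)) - (A $ (k-2)) * (B $ (k-3))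
     + ((A $ (k+1)) * (B $ (k+3)) - (A $ (k+3)) * (B $ (k+1)))
     + ((A $ (k+2)) * (B $ (k-1)) - (A $ (k-1)) * (B $ (k+2))))"

lemma oct_ident:
  "oct_form (a0, A) (- (A \<bullet> z), a0 *\<^sub>R z + cr7 A z) = (a0 * a0 + A \<bullet> A) *\<^sub>R z"
  unfolding vec_eq_iff forall_7
  apply (simp add: oct_nth cr7_def inner_vec_def sum_7 neg7 big7)
  apply (simp add: algebra_simps)
  done

lemma oct_E:
  assumes "(a :: real \<times> (real^7)) \<noteq> 0" shows "\<exists>b. oct_form a b = z"
proof -
  obtain a0 A where a: "a = (a0, A)" by fastforce
  define N where "N = a0 * a0 + A \<bullet> A"
  have "a \<bullet> a = N" by (simp add: a N_def)
  then have N: "N \<noteq> 0" using assms by auto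
  define p where "p = (- (A \<bullet> z), a0 *\<^sub>R z + cr7 A z)"
  have e1: "oct_form a ((1/N) *\<^sub>R p) = (1/N) *\<^sub>R oct_form a p" by (rule bilinear_rmul[OF oct_bil])
  have e2: "oct_form a p = N *\<^sub>R z" unfolding a N_def p_def by (rule oct_ident)
  have "oct_form a ((1/N) *\<^sub>R p) = z" using e1 e2 N by simp
  then show ?thesis by blast
qed


theorem corollary6p2:
  shows "(\<forall>F :: ((real^'n) \<times> (real^'n)) \<times> real \<Rightarrow> ((real^'n) \<times> (real^'n)) \<times> real.
            nhom heis_form F \<and> (\<exists>z\<in>ncenter heis_form. F z \<noteq> nunit)
              \<longrightarrow> cor_concl heis_form F)
       \<and> (\<forall>F :: ((real^'m) \<times> (real^'m) \<times> (real^'m) \<times> (real^'m)) \<times> (real \<times> real \<times> real)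
                \<Rightarrow> ((real^'m) \<times> (real^'m) \<times> (real^'m) \<times> (real^'m)) \<times> (real \<times> real \<times> real).
            nhom quat_form F \<and> inj_on F (ncenter quat_form)
              \<longrightarrow> cor_concl quat_form F)
       \<and> (\<forall>F :: (real \<times> (real^7)) \<times> (real^7) \<Rightarrow> (real \<times> (real^7)) \<times> (real^7).
            nhom oct_form F \<and> inj_on F (ncenter oct_form)
              \<longrightarrow> cor_concl oct_form F)"
proof (intro conjI allI impI)
  fix F :: "((real^'n) \<times> (real^'n)) \<times> real \<Rightarrow> ((real^'n) \<times> (real^'n)) \<times> real"
  assume "nhom heis_form F \<and> (\<exists>z\<in>ncenter heis_form. F z \<noteq> nunit)"
  then show "cor_concl heis_form F" using heis_main by blast
next
  fix F :: "((real^'m) \<times> (real^'m) \<times> (real^'m) \<times> (real^'m)) \<times> (real \<times> real \<times> real)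
                \<Rightarrow> ((real^'m) \<times> (real^'m) \<times> (real^'m) \<times> (real^'m)) \<times> (real \<times> real \<times> real)"
  assume h: "nhom quat_form F \<and> inj_on F (ncenter quat_form)"
  show "cor_concl quat_form F"
    by (rule main_inj[OF quat_bil quat_skew quat_A quat_B quat_D quat_E]) (use h in auto)
next
  fix F :: "(real \<times> (real^7)) \<times> (real^7) \<Rightarrow> (real \<times> (real^7)) \<times> (real^7)"
  assume h: "nhom oct_form F \<and> inj_on F (ncenter oct_form)"
  show "cor_concl oct_form F"
    by (rule main_inj[OF oct_bil oct_skew oct_A oct_B oct_D oct_E]) (use h in auto)
qed

end
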